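(* $$\int_0^{\pi/2} x^2\sec(x)\ln(\sin(x))\,dx = \frac{45}{16}\zeta(4)-4G^2.$$
   Context: $\zeta$ denotes the Riemann zeta function and $G=\sum_{k\ge1}(-1)^{k+1}/(2k-1)^2$ is Catalan's constant. *)

theory Defs
  imports "HOL-Analysis.Analysis"
begin

definition zeta :: "real \<Rightarrow> real" where
  "zeta s = (\<Sum>n. 1 / (real (Suc n)) powr s)"

text \<open>Catalan's constant G = sum over k \<ge> 1 of (-1)^(k+1)/(2k-1)^2 (reindexed from k = 0).\<close>
definition catalan :: real where
  "catalan = (\<Sum>k. (-1) ^ k / (2 * real k + 1) ^ 2)"

end

theory Submission
  imports Defs
begin


definition Kf :: "real \<Rightarrow> real \<Rightarrow> real" where
  "Kf x u = 4*u*(1-u^2)*cos x/((1+u^2)*(1 - 2*u^2*cos(2*x) + u^4))"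

lemma D_eq: "1 - 2*(u::real)^2*cos(2*(x::real)) + u^4 = (1-u^2)^2 + 2*u^2*(1 - cos (2*x))"
  by (simp add: algebra_simps power2_eq_square power4_eq_xxxx)

lemma cos2x_lt: "x \<in> {0<..<pi/2} \<Longrightarrow> cos (2*x) < 1"
proof -
  assume x: "x \<in> {0<..<pi/2}"
  have "cos (2*x) = 1 - 2 * sin x ^ 2" by (simp add: cos_double_sin)
  moreover have "sin x > 0" using x by (intro sin_gt_zero) auto
  ultimately show ?thesis by simp
qed

lemma D_pos: assumes "x \<in> {0<..<pi/2}" shows "0 < 1 - 2*u^2*cos(2*x) + u^4"
proof (cases "u = 0")
  case True thus ?thesis by simp
next
  case False
  have "0 < 2*u^2*(1 - cos (2*x))" using False cos2x_lt[OF assms] by simp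
  moreover have "0 \<le> (1-u^2)^2" by simp
  ultimately show ?thesis unfolding D_eq by linarith
qed

lemma Kf_nonneg: "x \<in> {0<..<pi/2} \<Longrightarrow> u \<in> {0<..<1} \<Longrightarrow> 0 \<le> Kf x u"
proof -
  assume x: "x \<in> {0<..<pi/2}" and u: "u \<in> {0<..<1}"
  have "cos x > 0" using x by (intro cos_gt_zero) auto
  moreover have "u^2 \<le> 1" using u by (simp add: power_le_one)
  moreover have "0 < (1 + u\<^sup>2) * (1 - 2 * u\<^sup>2 * cos (2 * x) + u ^ 4)"
    using D_pos[OF x, of u] by (intro mult_pos_pos) (auto simp: add_pos_nonneg)
  ultimately show ?thesis unfolding Kf_def using u
    by (intro divide_nonneg_pos mult_nonneg_nonneg) auto
qed

lemma claimA: assumes x: "x \<in> {0<..<pi/2}"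
  shows "((\<lambda>u. x^2 * Kf x u) has_integral (-(x ^ 2 * (1 / cos x) * ln (sin x)))) {0<..<1}"
proof -
  define c where "c = cos (2*x)"
  have cx: "cos x > 0" using x by (intro cos_gt_zero) auto
  have sx: "sin x > 0" using x by (intro sin_gt_zero) auto
  have Dp: "0 < u^4 - 2*c*u^2 + 1" for u using D_pos[OF x, of u] by (simp add: c_def algebra_simps)
  have c2: "1 + c = 2 * cos x ^ 2" by (simp add: c_def cos_double_cos)
  define F where "F u = x^2 * ((1/cos x) * (ln (1+u^2) - ln (u^4 - 2*c*u^2 + 1)/2))" for u
  have der: "(F has_real_derivative x^2 * Kf x u) (at u)" for u
  proof -
    have p1: "0 < 1 + u^2" by (simp add: add_pos_nonneg)
    have e: "x^2 * ((1/cos x) * ((2*u)/(1+u^2) - ((4*u^3 - 4*c*u)/(u^4-2*c*u^2+1))/2)) = x^2 * Kf x u"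
    proof -
      have h1: "((2*u)/(1+u^2) - ((4*u^3 - 4*c*u)/(u^4-2*c*u^2+1))/2)
          = (2*u*(1+c)*(1-u^2) / ((1+u^2)*(u^4 - 2*c*u^2 + 1)))"
        using p1 Dp[of u] apply (simp add: divide_simps) by algebra
      have h2: "(1/cos x) * (2*u*(1+c)*(1-u^2) / ((1+u^2)*(u^4 - 2*c*u^2 + 1))) = Kf x u"
      proof -
        have dd: "u^4 - 2*c*u^2 + 1 = 1 - 2*u^2*cos(2*x) + u^4" by (simp add: c_def)
        define D where "D = 1 - 2*u^2*cos(2*x) + u^4"
        have "cos x \<noteq> 0" "(1+u^2)*D \<noteq> 0" using cx Dp[of u] p1 by (simp_all add: D_def dd[symmetric])
        moreover define B where "B = (1+u^2)*D"
        ultimately show ?thesis unfolding Kf_def c2 dd D_def[symmetric] B_def[symmetric]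
          by (simp add: field_simps power2_eq_square)
      qed
      show ?thesis unfolding h1 h2 ..
    qed
    have d1: "((\<lambda>u. ln (1+u^2)) has_real_derivative 2*u/(1+u^2)) (at u)"
      using p1 by (auto intro!: derivative_eq_intros simp: field_simps power2_eq_square)
    have d2: "((\<lambda>u. ln (u^4 - 2*c*u^2 + 1)) has_real_derivative (4*u^3 - 4*c*u)/(u^4 - 2*c*u^2 + 1)) (at u)"
      using Dp[of u] by (auto intro!: derivative_eq_intros simp: field_simps power2_eq_square power3_eq_cube numeral_eq_Suc)
    show ?thesis unfolding F_def e[symmetric]
      by (intro DERIV_cmult DERIV_diff d1 DERIV_cdivide d2)
  qed
  have "((\<lambda>u. x^2 * Kf x u) has_integral (F 1 - F 0)) {0..1}"
    by (intro fundamental_theorem_of_calculus)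
       (auto intro: has_field_derivative_at_within der simp: has_real_derivative_iff_has_vector_derivative[symmetric])
  moreover have "F 1 - F 0 = -(x ^ 2 * (1 / cos x) * ln (sin x))"
  proof -
    have "2 - 2*c = 4 * sin x ^ 2" by (simp add: c_def cos_double_sin)
    hence "ln (1 - 2*c + 1) = 2 * ln 2 + 2 * ln (sin x)"
      using sx ln_realpow[of 2 2] by (simp add: ln_mult ln_realpow)
    thus ?thesis by (simp add: F_def algebra_simps)
  qed
  ultimately show ?thesis by (simp add: has_integral_Icc_iff_Ioo)
qed


definition ti3 :: "real \<Rightarrow> real" where
  "ti3 u = (\<Sum>n. (-1)^n * u^(2*n+1) / (2*real n+1)^3)"

definition Rf :: "real \<Rightarrow> real" where
  "Rf u = 4/(1+u^2) * (pi^2/4 * arctan u - 2 * ti3 u)"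

lemma poisson_partial:
  fixes q x :: real
  shows "(1 - 2*q* cos(2*x) + q^2) * (\<Sum>N<M. q^N * cos((2*real N+1)*x))
     = (1-q)* cos x - q^M * cos((2*real M+1)*x) + q^(M+1) * cos((2*real M+1)*x - 2*x)"
proof (induction M)
  case 0
  show ?case by (simp add: algebra_simps)
next
  case (Suc M)
  define a where "a = (2*real M+1)*x"
  have a1: "(2*real (Suc M)+1)*x = a + 2*x" by (simp add: a_def algebra_simps)
  have a2: "(2*real (Suc M)+1)*x - 2*x = a" by (simp add: a_def algebra_simps)
  have trig: "cos (a - 2*x) - 2* cos(2*x)* cos a = - cos (a + 2*x)"
    by (simp add: cos_add cos_diff algebra_simps)
  have "(1 - 2*q* cos(2*x) + q^2) * (\<Sum>N<Suc M. q^N * cos((2*real N+1)*x))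
      = (1-q)* cos x - q^M * cos a + q^(M+1) * cos(a - 2*x) + (1 - 2*q* cos(2*x) + q^2) * (q^M * cos a)"
    using Suc.IH by (simp add: a_def algebra_simps)
  also have "\<dots> = (1-q)* cos x + q^(M+1) * (cos (a - 2*x) - 2* cos(2*x)* cos a) + q^(M+2) * cos a"
    by (simp add: algebra_simps power2_eq_square)
  also have "\<dots> = (1-q)* cos x - q^(Suc M) * cos((2*real (Suc M)+1)*x) + q^(Suc M+1) * cos((2*real (Suc M)+1)*x - 2*x)"
    unfolding trig a1 a2 by simp
  finally show ?case .
qed

lemma term_integral:
  "((\<lambda>x. x^2 * cos((2*real N+1)*x)) has_integral
      ((-1)^N * (pi^2/(4*(2*real N+1)) - 2/(2*real N+1)^3))) {0..pi/2}"
proof -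
  define k where "k = 2*real N+1"
  have k0: "k > 0" by (simp add: k_def add_pos_nonneg)
  define G where "G = (\<lambda>x. x^2 * sin (k*x) / k + 2 * x * cos (k*x) / k^2 - 2 * sin (k*x) / k^3)"
  have der: "(G has_real_derivative x^2 * cos (k*x)) (at x)" for x
  proof -
    have "(G has_real_derivative (2*x* sin(k*x)/k + x^2*(cos(k*x)*k)/k + (2* cos(k*x) - 2*x*(sin(k*x)*k))/k^2 - 2*(cos(k*x)*k)/k^3)) (at x)"
      unfolding G_def by (auto intro!: derivative_eq_intros simp: field_simps)
    also have "(2*x* sin(k*x)/k + x^2*(cos(k*x)*k)/k + (2* cos(k*x) - 2*x*(sin(k*x)*k))/k^2 - 2*(cos(k*x)*k)/k^3) = x^2 * cos (k*x)"
      using k0 by (simp add: field_simps power2_eq_square power3_eq_cube)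
    finally show ?thesis .
  qed
  have "((\<lambda>x. x^2 * cos (k*x)) has_integral (G (pi/2) - G 0)) {0..pi/2}"
    by (intro fundamental_theorem_of_calculus)
       (auto intro: has_field_derivative_at_within der simp: has_real_derivative_iff_has_vector_derivative[symmetric])
  moreover have e: "k*(pi/2) = real N * pi + pi/2" by (simp add: k_def algebra_simps)
  have "sin (k*(pi/2)) = (-1)^N" "cos (k*(pi/2)) = 0"
    by (simp only: e; simp add: sin_add cos_add)+
  hence "G (pi/2) - G 0 = (-1)^N * (pi^2/(4*k) - 2/k^3)"
    by (simp add: G_def field_simps power2_eq_square)
  ultimately show ?thesis by (simp add: k_def)
qed



lemma summable_inv_sq: "summable (\<lambda>n. 1 / (real n + 1)^2)"
  using inverse_squares_sums sums_summable by (simp add: add.commute) blast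

lemma ti3_sums: assumes "\<bar>u\<bar> \<le> 1"
  shows "(\<lambda>n. (-1)^n * u^(2*n+1) / (2*real n+1)^3) sums ti3 u"
proof -
  have "summable (\<lambda>n. (-1)^n * u^(2*n+1) / (2*real n+1)^3)"
  proof (rule summable_comparison_test[OF _ summable_inv_sq], intro exI allI impI)
    fix n :: nat
    have "\<bar>u\<bar>^(2*n+1) \<le> 1" using assms by (intro power_le_one) auto
    moreover have "(real n + 1)^2 \<le> (2*real n+1)^3"
    proof -
      have "(real n + 1)^2 \<le> (2*real n+1)^2" by (intro power_mono) auto
      also have "\<dots> \<le> (2*real n+1)^3" by (intro power_increasing) auto
      finally show ?thesis .
    qed
    ultimately have "\<bar>u\<bar>^(2*n+1) / (2*real n+1)^3 \<le> 1 / (real n + 1)^2"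
      by (intro frac_le) (auto simp: add_pos_nonneg)
    thus "norm ((-1)^n * u^(2*n+1) / (2*real n+1)^3) \<le> 1 / (real n + 1)^2"
      by (simp add: abs_mult power_abs)
  qed
  thus ?thesis unfolding ti3_def by (simp add: summable_sums)
qed

lemma arctan_sums: assumes "\<bar>u\<bar> \<le> 1"
  shows "(\<lambda>n. (-1)^n * u^(2*n+1) / (2*real n+1)) sums arctan u"
proof -
  have "(\<lambda>k. (-1)^k * (1 / real (k*2+1) * u^(k*2+1))) sums arctan u"
    using arctan_series[OF assms] summable_arctan_series[OF assms] by (simp add: summable_sums)
  moreover have "(\<lambda>k. (-1)^k * (1 / real (k*2+1) * u^(k*2+1))) = (\<lambda>n. (-1)^n * u^(2*n+1) / (2*real n+1))"
    by (auto simp: mult.commute add.commute)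
  ultimately show ?thesis by simp
qed

lemma claimB: assumes u: "u \<in> {0<..<1}"
  shows "((\<lambda>x. x^2 * Kf x u) has_integral Rf u) {0<..<pi/2}"
proof -
  define q where "q = u^2"
  have q0: "0 \<le> q" and q1: "q < 1" using u by (auto simp: q_def abs_square_less_1)
  define C where "C = 4*u/(1+u^2)"
  have C0: "0 \<le> C" using u by (simp add: C_def)
  define c where "c N = (-1)^N * (pi^2/(4*(2*real N+1)) - 2/(2*real N+1)^3)" for N
  define D where "D x = 1 - 2*q*cos(2*x) + q^2" for x
  have Dpos: "D x > 0" for x
  proof -
    have "D x = (1-q)^2 + 2*q*(1 - cos (2*x))" by (simp add: D_def algebra_simps power2_eq_square)
    moreover have "0 \<le> 2*q*(1 - cos (2*x))" using q0 by simp
    moreover have "(1-q)^2 > 0" using q1 by simp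
    ultimately show ?thesis by linarith
  qed
  define f where "f M x = x^2 * (C * (\<Sum>N<M. q^N * cos((2*real N+1)*x)))" for M x
  have int_f: "(f M has_integral (C * (\<Sum>N<M. q^N * c N))) {0..pi/2}" for M
  proof -
    have "((\<lambda>x. \<Sum>N<M. C * q^N * (x^2 * cos((2*real N+1)*x))) has_integral (\<Sum>N<M. C * q^N * c N)) {0..pi/2}"
      by (intro has_integral_sum has_integral_mult_right) (simp_all only: c_def term_integral finite_lessThan)
    moreover have "(\<lambda>x. \<Sum>N<M. C * q^N * (x^2 * cos((2*real N+1)*x))) = f M"
      by (auto simp: f_def sum_distrib_left mult_ac)
    ultimately show ?thesis by (simp add: sum_distrib_left mult_ac)
  qed
  define h where "h x = x^2 * (C / (1-q))" for x
  have h_int: "h integrable_on {0..pi/2}"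
    unfolding h_def by (intro integrable_continuous_interval continuous_intros)
  have bound: "\<forall>x\<in>{0..pi/2}. norm (f M x) \<le> h x" for M
  proof
    fix x :: real
    have "\<bar>\<Sum>N<M. q^N * cos((2*real N+1)*x)\<bar> \<le> (\<Sum>N<M. q^N)"
    proof -
      have "\<bar>\<Sum>N<M. q^N * cos((2*real N+1)*x)\<bar> \<le> (\<Sum>N<M. \<bar>q^N * cos((2*real N+1)*x)\<bar>)"
        by (rule sum_abs)
      also have "\<dots> \<le> (\<Sum>N<M. q^N)"
        using q0 by (intro sum_mono) (auto simp: abs_mult intro!: mult_left_le)
      finally show ?thesis .
    qed
    also have "(\<Sum>N<M. q^N) \<le> 1/(1-q)"
    proof -
      have "(1 - q^M)/(1-q) \<le> 1/(1-q)" using q0 q1 by (intro divide_right_mono) auto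
      thus ?thesis using q1 by (simp add: sum_gp_strict)
    qed
    finally have sb: "\<bar>\<Sum>N<M. q^N * cos((2*real N+1)*x)\<bar> \<le> 1/(1-q)" .
    hence "\<bar>C * (\<Sum>N<M. q^N * cos((2*real N+1)*x))\<bar> \<le> C * (1/(1-q))"
      using C0 mult_left_mono[OF sb C0] by (simp add: abs_mult)
    hence "x^2 * \<bar>C * (\<Sum>N<M. q^N * cos((2*real N+1)*x))\<bar> \<le> x^2 * (C * (1/(1-q)))"
      by (intro mult_left_mono) auto
    thus "norm (f M x) \<le> h x" by (simp add: f_def h_def abs_mult)
  qed
  have lim: "\<forall>x\<in>{0..pi/2}. (\<lambda>M. f M x) \<longlonglongrightarrow> x^2 * Kf x u"
  proof
    fix x :: real
    have ps: "(\<Sum>N<M. q^N * cos((2*real N+1)*x)) =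
       ((1-q)*cos x - q^M * cos((2*real M+1)*x) + q^(M+1) * cos((2*real M+1)*x - 2*x)) / D x" for M
      using poisson_partial[of q x M] Dpos[of x] by (simp add: D_def field_simps)
    have z1: "(\<lambda>M. q^M * cos((2*real M+1)*x)) \<longlonglongrightarrow> 0"
    proof (rule Lim_null_comparison[where g="\<lambda>M. q^M"])
      show "\<forall>\<^sub>F M in sequentially. norm (q^M * cos((2*real M+1)*x)) \<le> q^M"
        using q0 by (intro always_eventually allI) (auto simp: abs_mult intro!: mult_left_le)
      show "(\<lambda>M. q^M) \<longlonglongrightarrow> 0" using q0 q1 by (intro LIMSEQ_power_zero) auto
    qed
    have z2: "(\<lambda>M. q^(M+1) * cos((2*real M+1)*x - 2*x)) \<longlonglongrightarrow> 0"
    proof (rule Lim_null_comparison[where g="\<lambda>M. q^(Suc M)"])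
      show "\<forall>\<^sub>F M in sequentially. norm (q^(M+1) * cos((2*real M+1)*x - 2*x)) \<le> q^(Suc M)"
        using q0 by (intro always_eventually allI) (auto simp: abs_mult intro!: mult_left_le)
      show "(\<lambda>M. q^(Suc M)) \<longlonglongrightarrow> 0" using q0 q1 by (intro LIMSEQ_Suc LIMSEQ_power_zero) auto
    qed
    have "(\<lambda>M. x^2 * (C * (((1-q)*cos x - q^M * cos((2*real M+1)*x) + q^(M+1) * cos((2*real M+1)*x - 2*x)) / D x)))
          \<longlonglongrightarrow> x^2 * (C * (((1-q)*cos x - 0 + 0) / D x))"
      using Dpos[of x] by (intro tendsto_intros z1 z2) auto
    moreover have "x^2 * (C * (((1-q)*cos x - 0 + 0) / D x)) = x^2 * Kf x u"
      by (simp add: Kf_def C_def D_def q_def)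
    ultimately show "(\<lambda>M. f M x) \<longlonglongrightarrow> x^2 * Kf x u"
      by (simp add: f_def ps)
  qed
  have sums: "(\<lambda>N. u * (q^N * c N)) sums (pi^2/4 * arctan u - 2 * ti3 u)"
  proof -
    have u1: "\<bar>u\<bar> \<le> 1" using u by simp
    have "(\<lambda>N. pi^2/4 * ((-1)^N * u^(2*N+1) / (2*real N+1)) - 2 * ((-1)^N * u^(2*N+1) / (2*real N+1)^3))
       sums (pi^2/4 * arctan u - 2 * ti3 u)"
      by (intro sums_diff sums_mult arctan_sums ti3_sums u1)
    moreover have "(\<lambda>N. pi^2/4 * ((-1)^N * u^(2*N+1) / (2*real N+1)) - 2 * ((-1)^N * u^(2*N+1) / (2*real N+1)^3))
        = (\<lambda>N. u * (q^N * c N))"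
    proof -
      have qN: "q^N = u^(2*N)" for N by (simp add: q_def power_mult)
      show ?thesis by (auto simp: c_def qN field_simps power_add)
    qed
    ultimately show ?thesis by simp
  qed
  have ylim: "(\<lambda>M. C * (\<Sum>N<M. q^N * c N)) \<longlonglongrightarrow> Rf u"
  proof -
    have "(\<lambda>M. 4/(1+u^2) * (\<Sum>N<M. u * (q^N * c N))) \<longlonglongrightarrow> 4/(1+u^2) * (pi^2/4 * arctan u - 2 * ti3 u)"
      using sums unfolding sums_def by (intro tendsto_intros)
    moreover have "(\<lambda>M. 4/(1+u^2) * (\<Sum>N<M. u * (q^N * c N))) = (\<lambda>M. C * (\<Sum>N<M. q^N * c N))"
      by (auto simp: C_def sum_distrib_left[symmetric] mult_ac)
    ultimately show ?thesis by (simp add: Rf_def)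
  qed
  have "((\<lambda>x. x^2 * Kf x u) has_integral Rf u) {0..pi/2}"
    by (rule has_integral_dominated_convergence[OF int_f h_int bound lim ylim])
  thus ?thesis by (simp add: has_integral_Icc_iff_Ioo)
qed



definition ti2 :: "real \<Rightarrow> real" where
  "ti2 u = (\<Sum>n. (-1)^n * u^(2*n+1) / (2*real n+1)^2)"

lemma odd_powser_deriv:
  fixes c :: "nat \<Rightarrow> real"
  assumes c: "\<And>n. \<bar>c n * (2*real n+1)\<bar> \<le> 1" and u: "0 < u" "u < 1"
  shows "((\<lambda>x. \<Sum>n. c n * x^(2*n+1)) has_real_derivative (\<Sum>n. c n * (2*real n+1) * u^(2*n))) (at u)"
proof -
  define r where "r = (1+u)/2"
  have r: "u < r" "r < 1" "0 < r" using u by (auto simp: r_def)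
  have der: "((\<lambda>x. c n * x^(2*n+1)) has_field_derivative c n * (2*real n+1) * x^(2*n)) (at x within {-r..r})" for n x
  proof -
    have d: "((\<lambda>x. c n * x^(2*n+1)) has_field_derivative c n * (real (2*n+1) * x^(2*n+1 - Suc 0))) (at x within {-r..r})"
      by (intro DERIV_cmult DERIV_pow)
    have e: "c n * (real (2*n+1) * x^(2*n+1 - Suc 0)) = c n * (2*real n+1) * x^(2*n)"
      by simp
    show ?thesis using d unfolding e .
  qed
  have bnd: "norm (c n * (2*real n+1) * x^(2*n)) \<le> (r^2)^n" if "x \<in> {-r..r}" for n x
  proof -
    have "\<bar>x\<bar> \<le> r" using that by auto
    hence "\<bar>x\<bar>^(2*n) \<le> r^(2*n)" by (intro power_mono) auto
    hence "\<bar>c n * (2*real n+1)\<bar> * \<bar>x\<bar>^(2*n) \<le> 1 * r^(2*n)"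
      using c[of n] by (intro mult_mono) auto
    thus ?thesis by (simp add: abs_mult power_abs power_mult)
  qed
  have sg: "summable (\<lambda>n. (r^2)^n)"
    using r by (intro summable_geometric) (simp add: abs_square_less_1)
  have uc: "uniformly_convergent_on {-r..r} (\<lambda>n x. \<Sum>i<n. c i * (2*real i+1) * x^(2*i))"
    by (rule Weierstrass_m_test'[OF bnd sg])
  have ui: "u \<in> interior {-r..r}" using r u by (simp add: interior_atLeastAtMost_real)
  show ?thesis
  proof (rule has_field_derivative_series'(2)[OF convex_real_interval(5) der uc _ _ ui, of 0])
    show "0 \<in> {-r..r}" using r by simp
    show "summable (\<lambda>n. c n * 0^(2*n+1))" by simp
  qed
qed

lemma odd_powser_cont:
  fixes c :: "nat \<Rightarrow> real"
  assumes c: "\<And>n. \<bar>c n\<bar> \<le> 1 / (real n+1)^2"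
  shows "continuous_on {0..1} (\<lambda>x. \<Sum>n. c n * x^(2*n+1))"
proof (rule uniform_limit_theorem[where F=sequentially])
  show "\<forall>\<^sub>F n in sequentially. continuous_on {0..1} (\<lambda>x. \<Sum>i<n. c i * x^(2*i+1))"
    by (intro always_eventually allI continuous_intros)
  have bnd: "norm (c n * x^(2*n+1)) \<le> 1 / (real n+1)^2" if "x \<in> {0..1}" for n x
  proof -
    have "\<bar>x\<bar>^(2*n+1) \<le> 1" using that by (intro power_le_one) auto
    hence "\<bar>c n\<bar> * \<bar>x\<bar>^(2*n+1) \<le> 1 / (real n+1)^2 * 1"
      using c[of n] by (intro mult_mono) auto
    thus ?thesis by (simp add: abs_mult power_abs)
  qed
  show "uniform_limit {0..1} (\<lambda>n x. \<Sum>i<n. c i * x^(2*i+1)) (\<lambda>x. \<Sum>n. c n * x^(2*n+1)) sequentially"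
    by (rule Weierstrass_m_test[OF bnd summable_inv_sq])
qed simp



lemma ti2_sums: assumes "\<bar>u\<bar> \<le> 1"
  shows "(\<lambda>n. (-1)^n * u^(2*n+1) / (2*real n+1)^2) sums ti2 u"
proof -
  have "summable (\<lambda>n. (-1)^n * u^(2*n+1) / (2*real n+1)^2)"
  proof (rule summable_comparison_test[OF _ summable_inv_sq], intro exI allI impI)
    fix n :: nat
    have "\<bar>u\<bar>^(2*n+1) \<le> 1" using assms by (intro power_le_one) auto
    moreover have "(real n + 1)^2 \<le> (2*real n+1)^2" by (intro power_mono) auto
    ultimately have "\<bar>u\<bar>^(2*n+1) / (2*real n+1)^2 \<le> 1 / (real n + 1)^2"
      by (intro frac_le) (auto simp: add_pos_nonneg)
    thus "norm ((-1)^n * u^(2*n+1) / (2*real n+1)^2) \<le> 1 / (real n + 1)^2"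
      by (simp add: abs_mult power_abs)
  qed
  thus ?thesis unfolding ti2_def by (simp add: summable_sums)
qed

lemma ti2_alt: "ti2 = (\<lambda>x. \<Sum>n. ((-1)^n / (2*real n+1)^2) * x^(2*n+1))"
  by (auto simp: ti2_def fun_eq_iff)
lemma ti3_alt: "ti3 = (\<lambda>x. \<Sum>n. ((-1)^n / (2*real n+1)^3) * x^(2*n+1))"
  by (auto simp: ti3_def fun_eq_iff)

lemma ti2_deriv: assumes "0 < u" "u < 1" shows "(ti2 has_real_derivative arctan u / u) (at u)"
proof -
  have "(ti2 has_real_derivative (\<Sum>n. ((-1)^n / (2*real n+1)^2) * (2*real n+1) * u^(2*n))) (at u)"
    unfolding ti2_alt
    by (rule odd_powser_deriv[OF _ assms]) (simp add: abs_mult power2_eq_square add_pos_nonneg)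
  moreover have "(\<lambda>n. ((-1)^n / (2*real n+1)^2) * (2*real n+1) * u^(2*n)) sums (arctan u / u)"
  proof -
    have "(\<lambda>n. (-1)^n * u^(2*n+1) / (2*real n+1) / u) sums (arctan u / u)"
      using assms by (intro sums_divide arctan_sums) auto
    moreover have "(\<lambda>n. (-1)^n * u^(2*n+1) / (2*real n+1) / u) = (\<lambda>n. ((-1)^n / (2*real n+1)^2) * (2*real n+1) * u^(2*n))"
    proof
      fix n :: nat
      have k: "2*real n+1 \<noteq> 0" by (simp add: add_pos_nonneg)
      have e: "u^(2*n+1) = u * u^(2*n)" by simp
      have "\<And>a k. k \<noteq> 0 \<Longrightarrow> a * u / k / u = a / k^2 * k" using assms by (simp add: field_simps power2_eq_square power3_eq_cube)
      from this[OF k, of "(-1)^n * u^(2*n)"]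
      show "(-1)^n * u^(2*n+1) / (2*real n+1) / u = ((-1)^n / (2*real n+1)^2) * (2*real n+1) * u^(2*n)"
        unfolding e by (simp add: mult_ac)
    qed
    ultimately show ?thesis by simp
  qed
  ultimately show ?thesis by (simp add: sums_iff)
qed

lemma ti3_deriv: assumes "0 < u" "u < 1" shows "(ti3 has_real_derivative ti2 u / u) (at u)"
proof -
  have "(ti3 has_real_derivative (\<Sum>n. ((-1)^n / (2*real n+1)^3) * (2*real n+1) * u^(2*n))) (at u)"
    unfolding ti3_alt
  proof (rule odd_powser_deriv[OF _ assms])
    fix n :: nat
    have "1 * 1 \<le> (2*real n+1)*(2*real n+1)" by (intro mult_mono) auto
    thus "\<bar>(-1)^n / (2*real n+1)^3 * (2*real n+1)\<bar> \<le> 1"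
      by (simp add: abs_mult power3_eq_cube add_pos_nonneg)
  qed
  moreover have "(\<lambda>n. ((-1)^n / (2*real n+1)^3) * (2*real n+1) * u^(2*n)) sums (ti2 u / u)"
  proof -
    have "(\<lambda>n. (-1)^n * u^(2*n+1) / (2*real n+1)^2 / u) sums (ti2 u / u)"
      using assms by (intro sums_divide ti2_sums) auto
    moreover have "(\<lambda>n. (-1)^n * u^(2*n+1) / (2*real n+1)^2 / u) = (\<lambda>n. ((-1)^n / (2*real n+1)^3) * (2*real n+1) * u^(2*n))"
    proof
      fix n :: nat
      have k: "2*real n+1 \<noteq> 0" by (simp add: add_pos_nonneg)
      have e: "u^(2*n+1) = u * u^(2*n)" by simp
      have "\<And>a k. k \<noteq> 0 \<Longrightarrow> a * u / k^2 / u = a / k^3 * k" using assms by (simp add: field_simps power2_eq_square power3_eq_cube)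
      from this[OF k, of "(-1)^n * u^(2*n)"]
      show "(-1)^n * u^(2*n+1) / (2*real n+1)^2 / u = ((-1)^n / (2*real n+1)^3) * (2*real n+1) * u^(2*n)"
        unfolding e by (simp add: mult_ac)
    qed
    ultimately show ?thesis by simp
  qed
  ultimately show ?thesis by (simp add: sums_iff)
qed

lemma ti2_cont: "continuous_on {0..1} ti2"
  unfolding ti2_alt
proof (rule odd_powser_cont)
  fix n :: nat
  have "(real n + 1)^2 \<le> (2*real n+1)^2" by (intro power_mono) auto
  hence "1 / (2*real n+1)^2 \<le> 1 / (real n + 1)^2"
    by (intro divide_left_mono) (auto simp: add_pos_nonneg)
  thus "\<bar>(-1)^n / (2*real n+1)^2\<bar> \<le> 1 / (real n + 1)^2" by (simp add: abs_mult)
qed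

lemma ti3_cont: "continuous_on {0..1} ti3"
  unfolding ti3_alt
proof (rule odd_powser_cont)
  fix n :: nat
  have "(real n + 1)^2 \<le> (2*real n+1)^2" by (intro power_mono) auto
  also have "\<dots> \<le> (2*real n+1)^3" by (intro power_increasing) auto
  finally have "1 / (2*real n+1)^3 \<le> 1 / (real n + 1)^2"
    by (intro divide_left_mono) (auto simp: add_pos_nonneg)
  thus "\<bar>(-1)^n / (2*real n+1)^3\<bar> \<le> 1 / (real n + 1)^2" by (simp add: abs_mult)
qed

lemma claimC: "(Rf has_integral (pi^4/32 - 2*pi*ti3 1 + 4 * catalan^2)) {0<..<1}"
proof -
  define \<Phi> where "\<Phi> u = pi^2/2 * (arctan u * arctan u) - 8 * (ti3 u * arctan u) + 4 * (ti2 u * ti2 u)" for u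
  have cont: "continuous_on {0..1} \<Phi>"
    unfolding \<Phi>_def by (intro continuous_intros ti2_cont ti3_cont)
  have der: "(\<Phi> has_vector_derivative Rf u) (at u)" if "u \<in> {0<..<1}" for u
  proof -
    have u: "0 < u" "u < 1" using that by auto
    have p1: "1 + u^2 > 0" by (simp add: add_pos_nonneg)
    define A where "A = inverse (1 + u^2)"
    have "(\<Phi> has_real_derivative (pi^2/2 * (A * arctan u + A * arctan u) - 8 * (ti2 u / u * arctan u + A * ti3 u) + 4 * (arctan u / u * ti2 u + arctan u / u * ti2 u))) (at u)"
      unfolding \<Phi>_def A_def
      by (intro DERIV_add DERIV_diff DERIV_cmult DERIV_mult DERIV_arctan ti2_deriv[OF u] ti3_deriv[OF u])
    also have "(pi^2/2 * (A * arctan u + A * arctan u) - 8 * (ti2 u / u * arctan u + A * ti3 u) + 4 * (arctan u / u * ti2 u + arctan u / u * ti2 u)) = Rf u"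
    proof -
      define w where "w = 1 + u^2"
      have "w \<noteq> 0" using p1 by (simp add: w_def)
      thus ?thesis using u unfolding Rf_def A_def w_def[symmetric] by (simp add: field_simps)
    qed
    finally show ?thesis by (simp add: has_real_derivative_iff_has_vector_derivative)
  qed
  have "(Rf has_integral (\<Phi> 1 - \<Phi> 0)) {0..1}"
    by (rule fundamental_theorem_of_calculus_interior[OF _ cont der]) auto
  moreover have "ti2 0 = 0" "ti3 0 = 0" by (simp_all add: ti2_def ti3_def)
  moreover have "ti2 1 = catalan" by (simp add: ti2_def catalan_def)
  ultimately show ?thesis
    by (simp add: \<Phi>_def has_integral_Icc_iff_Ioo power2_eq_square power4_eq_xxxx field_simps)
qed



lemma eqderiv:
  fixes f g :: "real \<Rightarrow> real"
  assumes "open S" "x \<in> S" "\<And>y. y \<in> S \<Longrightarrow> f y = g y"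
    "(f has_real_derivative a) (at x)" "(g has_real_derivative b) (at x)"
  shows "a = b"
proof -
  have "(g has_real_derivative a) (at x)"
    by (rule has_field_derivative_transform_within_open[OF assms(4,1,2,3)])
  thus ?thesis using assms(5) by (rule DERIV_unique)
qed

lemma not_nonpos: "(x::real) > 0 \<Longrightarrow> x \<notin> \<int>\<^sub>\<le>\<^sub>0"
  by auto

lemma sin_pi_pos: "(x::real) \<in> {0<..<1} \<Longrightarrow> sin (pi * x) > 0"
  by (intro sin_gt_zero) auto

lemma Gamma_refl_real:
  assumes x: "(x::real) \<in> {0<..<1}"
  shows "Gamma x * Gamma (1 - x) * sin (pi * x) = pi"
proof -
  have "Gamma (complex_of_real x) * Gamma (1 - complex_of_real x) = of_real pi / sin (of_real pi * of_real x)"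
    by (rule Gamma_reflection_complex)
  hence "complex_of_real (Gamma x * Gamma (1 - x)) = complex_of_real (pi / sin (pi * x))"
    by (simp flip: Gamma_complex_of_real sin_of_real)
  hence "Gamma x * Gamma (1 - x) = pi / sin (pi * x)" by (simp only: of_real_eq_iff)
  thus ?thesis using sin_pi_pos[OF x] by (simp add: field_simps)
qed

lemma Digamma_refl_real:
  assumes x: "(x::real) \<in> {0<..<1}"
  shows "Digamma (1 - x) - Digamma x = pi * cos (pi * x) / sin (pi * x)"
proof -
  have x0: "x > 0" "1 - x > 0" using x by auto
  have s: "sin (pi * x) > 0" using sin_pi_pos[OF x] .
  have d1: "((\<lambda>y. Gamma y * Gamma (1 - y) * sin (pi * y)) has_real_derivative
      (Gamma x * Digamma x * Gamma (1 - x) + (- (Gamma (1 - x) * Digamma (1 - x))) * Gamma x) * sin (pi * x)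
       + cos (pi * x) * pi * (Gamma x * Gamma (1 - x))) (at x)"
    using x0 by (auto intro!: derivative_eq_intros not_nonpos simp: algebra_simps)
  have d2: "((\<lambda>y. pi) has_real_derivative 0) (at x)" by simp
  have "(Gamma x * Digamma x * Gamma (1 - x) + (- (Gamma (1 - x) * Digamma (1 - x))) * Gamma x) * sin (pi * x)
       + cos (pi * x) * pi * (Gamma x * Gamma (1 - x)) = 0"
    by (rule eqderiv[OF open_greaterThanLessThan x _ d1 d2]) (rule Gamma_refl_real)
  hence "(Gamma x * Gamma (1 - x)) * ((Digamma x - Digamma (1 - x)) * sin (pi * x) + pi * cos (pi * x)) = 0"
    by (simp add: algebra_simps)
  moreover have "Gamma x * Gamma (1 - x) \<noteq> 0"
    using Gamma_real_pos[OF x0(1)] Gamma_real_pos[OF x0(2)] by simp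
  ultimately have "(Digamma x - Digamma (1 - x)) * sin (pi * x) + pi * cos (pi * x) = 0" by simp
  thus ?thesis using s by (simp add: field_simps)
qed



lemma poly1:
  assumes x: "(x::real) \<in> {0<..<1}"
  shows "- Polygamma 1 (1 - x) - Polygamma 1 x = - (pi^2) / sin (pi * x)^2"
proof -
  have x0: "x > 0" "1 - x > 0" using x by auto
  have s: "sin (pi * x) \<noteq> 0" using sin_pi_pos[OF x] by simp
  have d1: "((\<lambda>y. Digamma (1 - y) - Digamma y) has_real_derivative - Polygamma 1 (1 - x) - Polygamma 1 x) (at x)"
    using x0 by (auto intro!: derivative_eq_intros not_nonpos)
  have d2: "((\<lambda>y. pi * cos (pi * y) / sin (pi * y)) has_real_derivative - (pi^2) / sin (pi * x)^2) (at x)"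
  proof -
    have "((\<lambda>y. pi * cos (pi * y) / sin (pi * y)) has_real_derivative
        (pi * (- sin (pi * x) * pi) * sin (pi * x) - pi * cos (pi * x) * (cos (pi * x) * pi)) / (sin (pi * x) * sin (pi * x))) (at x)"
      using s by (auto intro!: derivative_eq_intros simp: algebra_simps)
    also have "(pi * (- sin (pi * x) * pi) * sin (pi * x) - pi * cos (pi * x) * (cos (pi * x) * pi)) = - (pi^2) * (sin (pi * x)^2 + cos (pi * x)^2)"
      by (simp only: power2_eq_square) algebra
    also have "\<dots> = - (pi^2)" by simp
    finally show ?thesis by (simp add: power2_eq_square)
  qed
  show ?thesis
    by (rule eqderiv[OF open_greaterThanLessThan x _ d1 d2]) (rule Digamma_refl_real)
qed



lemma poly2:
  assumes x: "(x::real) \<in> {0<..<1}"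
  shows "Polygamma 2 (1 - x) - Polygamma 2 x = 2 * pi^3 * cos (pi * x) / sin (pi * x)^3"
proof -
  have x0: "x > 0" "1 - x > 0" using x by auto
  have s: "sin (pi * x) \<noteq> 0" using sin_pi_pos[OF x] by simp
  have d1: "((\<lambda>y. - Polygamma 1 (1 - y) - Polygamma 1 y) has_real_derivative Polygamma 2 (1 - x) - Polygamma 2 x) (at x)"
    using x0 by (auto intro!: derivative_eq_intros not_nonpos simp: numeral_2_eq_2)
  have d2: "((\<lambda>y. - (pi^2) / sin (pi * y)^2) has_real_derivative 2 * pi^3 * cos (pi * x) / sin (pi * x)^3) (at x)"
    using s by (auto intro!: derivative_eq_intros simp: field_simps power2_eq_square power3_eq_cube)
  show ?thesis
    by (rule eqderiv[OF open_greaterThanLessThan x _ d1 d2]) (rule poly1)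
qed

lemma poly3: "Polygamma 3 (1/2::real) = pi^4"
proof -
  define x :: real where "x = 1/2"
  have x: "x \<in> {0<..<1}" by (simp add: x_def)
  have x0: "x > 0" "1 - x > 0" using x by auto
  have d1: "((\<lambda>y. Polygamma 2 (1 - y) - Polygamma 2 y) has_real_derivative - Polygamma 3 (1 - x) - Polygamma 3 x) (at x)"
    using x0 by (auto intro!: derivative_eq_intros not_nonpos simp: numeral_3_eq_3)
  have d2: "((\<lambda>y. 2 * pi^3 * cos (pi * y) / sin (pi * y)^3) has_real_derivative - 2 * pi^4) (at x)"
  proof -
    have "sin (pi * x) = 1" "cos (pi * x) = 0" by (simp_all add: x_def)
    thus ?thesis
      by (auto intro!: derivative_eq_intros simp: field_simps power2_eq_square power3_eq_cube power4_eq_xxxx)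
  qed
  have "- Polygamma 3 (1 - x) - Polygamma 3 x = - 2 * pi^4"
    by (rule eqderiv[OF open_greaterThanLessThan x _ d1 d2]) (rule poly2)
  moreover have "1 - x = x" by (simp add: x_def)
  ultimately show ?thesis by (simp add: x_def)
qed



lemma lambda4: "(\<lambda>k. 1 / (2*real k+1)^4) sums (pi^4/96)"
proof -
  have "(\<lambda>k. inverse ((1/2 + real k)^Suc 3)) sums ((-1)^Suc 3 * Polygamma 3 (1/2::real) / fact 3)"
    by (rule Polygamma_LIMSEQ) auto
  hence "(\<lambda>k. inverse ((1/2 + real k)^4)) sums (pi^4/6)"
    by (simp add: poly3 fact_numeral)
  hence "(\<lambda>k. inverse ((1/2 + real k)^4) / 16) sums (pi^4/6/16)"
    by (rule sums_divide)
  moreover have "(\<lambda>k. inverse ((1/2 + real k)^4) / 16) = (\<lambda>k. 1 / (2*real k+1)^4)"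
  proof
    fix k
    have "(2*real k+1)^4 = 16 * (1/2 + real k)^4"
      by (simp only: power4_eq_xxxx) algebra
    thus "inverse ((1/2 + real k)^4) / 16 = 1 / (2*real k+1)^4"
      by (simp add: field_simps)
  qed
  ultimately show ?thesis by simp
qed

lemma beta3: "ti3 1 = pi^3/32"
proof -
  have s4: "sin (pi/4) ^ 2 = 1/2" "cos (pi/4) = sin (pi/4)"
    by (simp_all add: sin_45 cos_45 power_divide)
  have sp: "sin (pi/4) > 0" by (simp add: sin_45)
  have p: "Polygamma 2 (3/4) - Polygamma 2 (1/4::real) = 4 * pi^3"
  proof -
    have "Polygamma 2 (1 - 1/4) - Polygamma 2 (1/4::real) = 2 * pi^3 * cos (pi * (1/4)) / sin (pi * (1/4))^3"
      by (rule poly2) auto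
    also have "\<dots> = 2 * pi^3 / sin (pi/4)^2"
      using s4 sp by (simp add: power3_eq_cube power2_eq_square)
    also have "\<dots> = 2 * pi^3 / (1/2)" by (simp only: s4(1))
    also have "\<dots> = 4 * pi^3" by simp
    finally show ?thesis by simp
  qed
  have a: "(\<lambda>k. inverse ((1/4 + real k)^Suc 2)) sums ((-1)^Suc 2 * Polygamma 2 (1/4::real) / fact 2)"
    by (rule Polygamma_LIMSEQ) auto
  have b: "(\<lambda>k. inverse ((3/4 + real k)^Suc 2)) sums ((-1)^Suc 2 * Polygamma 2 (3/4::real) / fact 2)"
    by (rule Polygamma_LIMSEQ) auto
  have "(\<lambda>k. (inverse ((1/4 + real k)^Suc 2) - inverse ((3/4 + real k)^Suc 2)) / 64) sums
        (((-1)^Suc 2 * Polygamma 2 (1/4::real) / fact 2 - (-1)^Suc 2 * Polygamma 2 (3/4::real) / fact 2) / 64)"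
    by (intro sums_divide sums_diff a b)
  also have "(((-1)^Suc 2 * Polygamma 2 (1/4::real) / fact 2 - (-1)^Suc 2 * Polygamma 2 (3/4::real) / fact 2) / 64) = pi^3/32"
    using p by (simp add: fact_numeral field_simps)
  also have "(\<lambda>k. (inverse ((1/4 + real k)^Suc 2) - inverse ((3/4 + real k)^Suc 2)) / 64)
      = (\<lambda>k. 1 / (4*real k+1)^3 - 1 / (4*real k+3)^3)"
  proof
    fix k
    have "(4*real k+1)^3 = 64 * (1/4 + real k)^3" "(4*real k+3)^3 = 64 * (3/4 + real k)^3"
      by (simp only: power3_eq_cube; algebra)+
    thus "(inverse ((1/4 + real k)^Suc 2) - inverse ((3/4 + real k)^Suc 2)) / 64 = 1 / (4*real k+1)^3 - 1 / (4*real k+3)^3"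
      by (simp add: field_simps)
  qed
  finally have s1: "(\<lambda>k. 1 / (4*real k+1)^3 - 1 / (4*real k+3)^3) sums (pi^3/32)" .
  have "(\<lambda>n. sum (\<lambda>i. (-1)^i * 1^(2*i+1) / (2*real i+1)^3) {n*2..<n*2+2}) sums ti3 1"
    by (rule sums_group[OF ti3_sums]) auto
  moreover have "(\<lambda>n. sum (\<lambda>i. (-1)^i * 1^(2*i+1) / (2*real i+1)^3) {n*2..<n*2+2}) = (\<lambda>k. 1 / (4*real k+1)^3 - 1 / (4*real k+3)^3)"
  proof
    fix n :: nat
    have "{n*2..<n*2+2} = {2*n, 2*n+1}" by auto
    thus "sum (\<lambda>i. (-1)^i * 1^(2*i+1) / (2*real i+1)^3) {n*2..<n*2+2} = 1 / (4*real n+1)^3 - 1 / (4*real n+3)^3"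
      by (simp add: algebra_simps)
  qed
  ultimately have "(\<lambda>k. 1 / (4*real k+1)^3 - 1 / (4*real k+3)^3) sums ti3 1" by simp
  with s1 show ?thesis by (simp add: sums_iff)
qed

lemma zeta4: "zeta 4 = pi^4/90"
proof -
  define f where "f n = 1 / (real n + 1)^4" for n
  have fs: "summable f"
  proof (rule summable_comparison_test[OF _ summable_inv_sq], intro exI allI impI)
    fix n :: nat
    have "(real n + 1)^2 \<le> (real n + 1)^4" by (intro power_increasing) auto
    thus "norm (f n) \<le> 1 / (real n + 1)^2" unfolding f_def
      by (simp add: divide_le_cancel add_pos_nonneg) (intro divide_left_mono, auto)
  qed
  have z: "zeta 4 = suminf f"
    unfolding zeta_def f_def by (simp add: add.commute)
  hence fz: "f sums zeta 4" using fs by (simp add: summable_sums)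
  have g: "(\<lambda>n. sum f {n*2..<n*2+2}) sums zeta 4" by (rule sums_group[OF fz]) auto
  have sp: "sum f {n*2..<n*2+2} = 1 / (2*real n+1)^4 + f n / 16" for n
  proof -
    have "{n*2..<n*2+2} = {2*n, 2*n+1}" by auto
    moreover have "(2 * real n + 2)^4 = 16 * (real n + 1)^4" by (simp add: power4_eq_xxxx algebra_simps)
    ultimately show ?thesis by (simp add: f_def algebra_simps)
  qed
  have "(\<lambda>n. 1 / (2*real n+1)^4 + f n / 16) sums (pi^4/96 + zeta 4 / 16)"
    by (intro sums_add lambda4 sums_divide fz)
  moreover have "(\<lambda>n. 1 / (2*real n+1)^4 + f n / 16) sums zeta 4" using g sp by simp
  ultimately have "zeta 4 = pi^4/96 + zeta 4 / 16" by (simp add: sums_iff)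
  thus ?thesis by simp
qed


lemma assemble:
  assumes claimC: "(Rf has_integral V) {0<..<1}"
  shows "((\<lambda>x::real. -(x ^ 2 * (1 / cos x) * ln (sin x))) has_integral V) {0<..<pi/2}"
proof -
  define g where "g x = -(x ^ 2 * (1 / cos x) * ln (sin x))" for x :: real
  define S where "S = {0<..<pi/2::real}"
  define T where "T = {0<..<1::real}"
  have Rnn: "0 \<le> Rf u" if "u \<in> T" for u
    using claimB[of u] that Kf_nonneg unfolding T_def
    by (intro has_integral_nonneg[OF claimB[of u]]) auto
  have gnn: "0 \<le> g x" if "x \<in> S" for x
    using claimA[of x] that Kf_nonneg unfolding S_def g_def
    by (intro has_integral_nonneg[OF claimA[of x]]) (auto simp: T_def)
  have meas: "(\<lambda>(x,u). ennreal (indicator (S \<times> T) (x,u) * (x^2 * Kf x u))) \<in> borel_measurable (lborel \<Otimes>\<^sub>M lborel)"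
    unfolding Kf_def S_def T_def by measurable
  have "(\<integral>\<^sup>+x. ennreal (indicator S x * g x) \<partial>lborel) =
        (\<integral>\<^sup>+x. (\<integral>\<^sup>+u. ennreal (indicator (S \<times> T) (x,u) * (x^2 * Kf x u)) \<partial>lborel) \<partial>lborel)"
  proof (rule nn_integral_cong)
    fix x :: real
    show "ennreal (indicator S x * g x) = (\<integral>\<^sup>+u. ennreal (indicator (S \<times> T) (x,u) * (x^2 * Kf x u)) \<partial>lborel)"
    proof (cases "x \<in> S")
      case True
      have "(\<integral>\<^sup>+u. ennreal (indicator (S \<times> T) (x,u) * (x^2 * Kf x u)) \<partial>lborel) =
            (\<integral>\<^sup>+u. ennreal (indicator T u * (x^2 * Kf x u)) \<partial>lborel)"
        using True by (intro nn_integral_cong) (simp add: indicator_def)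
      also have "\<dots> = ennreal (g x)"
        using True Kf_nonneg claimA[of x] unfolding g_def S_def T_def
        by (intro nn_integral_has_integral_lebesgue) auto
      finally show ?thesis using True by simp
    qed (simp add: indicator_def)
  qed
  also have "\<dots> = (\<integral>\<^sup>+u. (\<integral>\<^sup>+x. ennreal (indicator (S \<times> T) (x,u) * (x^2 * Kf x u)) \<partial>lborel) \<partial>lborel)"
    by (rule lborel_pair.Fubini'[symmetric]) (use meas in simp)
  also have "\<dots> = (\<integral>\<^sup>+u. ennreal (indicator T u * Rf u) \<partial>lborel)"
  proof (rule nn_integral_cong)
    fix u :: real
    show "(\<integral>\<^sup>+x. ennreal (indicator (S \<times> T) (x,u) * (x^2 * Kf x u)) \<partial>lborel) = ennreal (indicator T u * Rf u)"
    proof (cases "u \<in> T")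
      case True
      have "(\<integral>\<^sup>+x. ennreal (indicator (S \<times> T) (x,u) * (x^2 * Kf x u)) \<partial>lborel) =
            (\<integral>\<^sup>+x. ennreal (indicator S x * (x^2 * Kf x u)) \<partial>lborel)"
        using True by (intro nn_integral_cong) (simp add: indicator_def)
      also have "\<dots> = ennreal (Rf u)"
        using True Kf_nonneg claimB[of u] unfolding S_def T_def
        by (intro nn_integral_has_integral_lebesgue) auto
      finally show ?thesis using True by simp
    qed (simp add: indicator_def)
  qed
  also have "\<dots> = ennreal V"
    using Rnn claimC unfolding T_def by (intro nn_integral_has_integral_lebesgue) auto
  finally have eq: "(\<integral>\<^sup>+x. ennreal (indicator S x * g x) \<partial>lborel) = ennreal V" .
  have V0: "0 \<le> V"
    using has_integral_nonneg[OF claimC] Rnn by (auto simp: T_def)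
  have "((\<lambda>x. indicator S x * g x) has_integral V) UNIV"
    by (rule nn_integral_has_integral[OF _ _ eq V0])
       (use gnn in \<open>auto simp: indicator_def g_def S_def\<close>)
  moreover have "(\<lambda>x. indicator S x * g x) = (\<lambda>x. if x \<in> S then g x else 0)"
    by (auto simp: indicator_def)
  ultimately have "(g has_integral V) S"
    by (simp add: has_integral_restrict_UNIV)
  thus ?thesis unfolding g_def S_def .
qed

theorem lemma2:
  shows "((\<lambda>x::real. x ^ 2 * (1 / cos x) * ln (sin x)) has_integral
            (45 / 16 * zeta 4 - 4 * catalan ^ 2)) {0..pi/2}"
proof -
  have h: "((\<lambda>x::real. -(x ^ 2 * (1 / cos x) * ln (sin x))) has_integral (pi^4/32 - 2*pi*ti3 1 + 4 * catalan^2)) {0<..<pi/2}"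
    by (rule assemble[OF claimC])
  have h2: "((\<lambda>x::real. x ^ 2 * (1 / cos x) * ln (sin x)) has_integral -(pi^4/32 - 2*pi*ti3 1 + 4 * catalan^2)) {0<..<pi/2}"
    using has_integral_neg[OF h] by simp
  have e: "-(pi^4/32 - 2*pi*ti3 1 + 4 * catalan^2) = 45 / 16 * zeta 4 - 4 * catalan ^ 2"
    unfolding zeta4 beta3 by (simp only: power4_eq_xxxx power3_eq_cube)
  show ?thesis using h2 unfolding e has_integral_Icc_iff_Ioo .
qed

end
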